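(* Let $p$ be a prime, $k$ a positive integer, and $n=p^k$. Then \[\operatorname{disc}(\mathcal A_n)\ge\frac14\,p^{\frac{k-\lfloor k/3\rfloor}{2}}.\]
   Context: An arithmetic progression in $\mathbb{Z}_n$ is a set $\{a+kd: 0\le k<l\}$ with $a,d\in\mathbb{Z}_n$ and $l$ an integer with $0\le l\le n/\gcd(n,d)$ (with $\gcd(0,n)=n$); $\mathcal A_n$ is the family of all of them. For $\chi:\mathbb{Z}_n\to\{1,-1\}$, $\chi(A)=\sum_{x\in A}\chi(x)$ and $\operatorname{disc}(\mathcal A_n)=\min_{\chi:\mathbb{Z}_n\to\{1,-1\}}\max_{A\in\mathcal A_n}|\chi(A)|$. *)

theory Defs
  imports Complex_Main "HOL-Library.FuncSet" "HOL-Computational_Algebra.Primes"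
begin

text \<open>Z_n is represented by the residues {0..<n}, with arithmetic mod n.
  An arithmetic progression {a + k d : 0 <= k < l} with a, d in Z_n and
  0 <= l <= n / gcd(n,d) (note gcd 0 n = n).\<close>

definition APs :: "nat \<Rightarrow> nat set set" where
  "APs n = {{(a + k * d) mod n | k. k < l} | a d l.
              a < n \<and> d < n \<and> l \<le> n div gcd n d}"

definition disc_AP :: "nat \<Rightarrow> int" where
  "disc_AP n = Min {Max {\<bar>\<Sum>x\<in>A. \<chi> x\<bar> | A. A \<in> APs n} | \<chi>.
                       \<chi> \<in> {0..<n} \<rightarrow>\<^sub>E {1, -1}}"

end

theory Submission
  imports Defs
begin


lemma sum_split: fixes a b :: nat shows "(\<Sum>z<a*b. g z) = (\<Sum>y<b. \<Sum>x<a. g (x + a*y))"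
proof (induction b)
  case 0 then show ?case by simp
next
  case (Suc b)
  have e: "{..<a * Suc b} = {..<a*b} \<union> {a*b..<a*b+a}" by auto
  have "(\<Sum>z<a*Suc b. g z) = sum g ({..<a*b} \<union> {a*b..<a*b+a})" by (simp only: e)
  also have "\<dots> = (\<Sum>z<a*b. g z) + (\<Sum>z\<in>{a*b..<a*b+a}. g z)"
    by (rule sum.union_disjoint) auto
  also have "(\<Sum>z\<in>{a*b..<a*b+a}. g z) = (\<Sum>x<a. g (x + a*b))"
    using sum.shift_bounds_nat_ivl[of g 0 "a*b" a] by (simp add: atLeast0LessThan add.commute)
  finally show ?case using Suc by simp
qed

lemma sum_shift_periodic:
  fixes g :: "nat \<Rightarrow> 'a::ab_group_add"
  assumes "\<And>x. g (x + M) = g x"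
  shows "(\<Sum>y<M. g (y + s)) = (\<Sum>y<M. g y)"
proof (induction s)
  case 0 then show ?case by simp
next
  case (Suc s)
  have "(\<Sum>y<Suc M. g (y + s)) = g s + (\<Sum>y<M. g (Suc y + s))"
    by (subst sum.lessThan_Suc_shift) simp
  moreover have "(\<Sum>y<Suc M. g (y + s)) = (\<Sum>y<M. g (y + s)) + g s"
    using assms[of s] by (simp add: add.commute)
  ultimately show ?case using Suc by (simp add: algebra_simps)
qed

lemma cs_sum:
  fixes x :: "nat \<Rightarrow> int"
  assumes "finite A"
  shows "(\<Sum>r\<in>A. x r)^2 \<le> int (card A) * (\<Sum>r\<in>A. (x r)^2)"
proof -
  have "0 \<le> (\<Sum>i\<in>A. \<Sum>j\<in>A. (x i - x j)^2)" by (intro sum_nonneg) auto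
  also have "\<dots> = (\<Sum>i\<in>A. \<Sum>j\<in>A. (x i)^2 + (x j)^2 - 2 * (x i * x j))"
    by (intro sum.cong refl) (simp add: power2_eq_square algebra_simps)
  also have "\<dots> = 2 * (int (card A) * (\<Sum>r\<in>A. (x r)^2)) - 2 * (\<Sum>r\<in>A. x r)^2"
    by (simp add: sum.distrib sum_subtractf sum_distrib_left sum_distrib_right
          power2_eq_square sum_product algebra_simps)
  finally show ?thesis by simp
qed

lemma mod_cancel_nat_aux:
  fixes m u x y :: nat
  assumes "coprime m u" "(u*x) mod m = (u*y) mod m" "x \<le> y"
  shows "x mod m = y mod m"
proof -
  have "u*x \<le> u*y" using assms(3) by simp
  then have "m dvd u*y - u*x" using assms(2) mod_eq_dvd_iff_nat[of "u*x" "u*y" m] by simp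
  then have "m dvd u*(y-x)" by (simp add: diff_mult_distrib2)
  then have "m dvd y - x" using coprime_dvd_mult_right_iff[OF assms(1)] by simp
  then show ?thesis using assms(3) mod_eq_dvd_iff_nat[of x y m] by simp
qed
lemma mod_cancel_nat:
  fixes m u x y :: nat
  assumes "coprime m u" "(u*x) mod m = (u*y) mod m"
  shows "x mod m = y mod m"
proof (cases "x \<le> y")
  case True then show ?thesis using mod_cancel_nat_aux[OF assms] by simp
next
  case False then show ?thesis using mod_cancel_nat_aux[OF assms(1) assms(2)[symmetric]] by simp
qed

locale apsetup =
  fixes p k :: nat and f :: "nat \<Rightarrow> int" and D :: int
  assumes p: "prime p" and kpos: "k > 0"
  and per: "\<And>x. f (x mod p^k) = f x"
  and sq: "\<And>x. f x * f x = 1"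
  and apb: "\<And>a d L. a < p^k \<Longrightarrow> d < p^k \<Longrightarrow> L \<le> p^k div gcd (p^k) d \<Longrightarrow>
              \<bar>\<Sum>i<L. f (a + i*d)\<bar> \<le> D"
begin

abbreviation "n \<equiv> p^k"
definition "C t = (\<Sum>x<n. f x * f (x + t))"
definition "Us = {d. d < n \<and> \<not> p dvd d}"
definition "U t = (\<Sum>d\<in>Us. C (t*d))"
definition "T v = {t. t < n \<and> p^v dvd t}"
definition "R v = (\<Sum>t\<in>T v. C t)"
definition "S v c = (\<Sum>y<p^(k-v). f (c + y * p^v))"
definition "dst i j = (if i \<le> j then j - i else i - (j::nat))"

lemma p1: "p > 1" using p prime_gt_1_nat by blast
lemma npos: "n > 0" using p1 by simp

lemma fper: "f (x + n) = f x"
  by (metis mod_add_self2 per)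

lemma C_mod: "C (t mod n) = C t"
  unfolding C_def
proof (intro sum.cong refl)
  fix x
  have "f (x + t mod n) = f ((x + t mod n) mod n)" by (simp add: per)
  also have "\<dots> = f ((x + t) mod n)" by (simp add: mod_add_right_eq)
  also have "\<dots> = f (x + t)" by (simp add: per)
  finally show "f x * f (x + t mod n) = f x * f (x + t)" by simp
qed

lemma C0: "C 0 = int n" unfolding C_def by (simp add: sq)

lemma pair_le:
  assumes "i \<le> j"
  shows "(\<Sum>a<n. f (a + i*d) * f (a + j*d)) = C ((j-i)*d)"
proof -
  define g where "g x = f x * f (x + (j-i)*d)" for x
  have gp: "g (x + n) = g x" for x
  proof -
    have "x + n + (j-i)*d = (x + (j-i)*d) + n" by simp
    then show ?thesis unfolding g_def by (simp only: fper)
  qed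
  have e: "i*d + (j-i)*d = j*d" using assms by (simp add: add_mult_distrib[symmetric])
  have "(\<Sum>a<n. f (a + i*d) * f (a + j*d)) = (\<Sum>a<n. g (a + i*d))"
    unfolding g_def by (intro sum.cong refl) (simp add: e[symmetric] add.assoc)
  also have "\<dots> = (\<Sum>a<n. g a)" by (rule sum_shift_periodic) (rule gp)
  finally show ?thesis unfolding g_def C_def .
qed

lemma pair: "(\<Sum>a<n. f (a + i*d) * f (a + j*d)) = C (dst i j * d)"
proof (cases "i \<le> j")
  case True then show ?thesis using pair_le by (simp add: dst_def)
next
  case False
  then have "(\<Sum>a<n. f (a + i*d) * f (a + j*d)) = (\<Sum>a<n. f (a + j*d) * f (a + i*d))"
    by (simp add: mult.commute)
  also have "\<dots> = C ((i-j)*d)" using False by (intro pair_le) simp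
  finally show ?thesis using False by (simp add: dst_def)
qed

lemma total:
  "(\<Sum>a<n. \<Sum>d\<in>Us. (\<Sum>i<l. f (a + i*d))^2) = (\<Sum>i<l. \<Sum>j<l. U (dst i j))"
proof -
  have "(\<Sum>a<n. \<Sum>d\<in>Us. (\<Sum>i<l. f (a + i*d))^2)
      = (\<Sum>a<n. \<Sum>d\<in>Us. \<Sum>i<l. \<Sum>j<l. f (a + i*d) * f (a + j*d))"
    by (simp add: power2_eq_square sum_product)
  also have "\<dots> = (\<Sum>d\<in>Us. \<Sum>a<n. \<Sum>i<l. \<Sum>j<l. f (a + i*d) * f (a + j*d))"
    by (rule sum.swap)
  also have "\<dots> = (\<Sum>d\<in>Us. \<Sum>i<l. \<Sum>j<l. \<Sum>a<n. f (a + i*d) * f (a + j*d))"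
  proof (rule sum.cong[OF refl])
    fix d
    have "(\<Sum>a<n. \<Sum>i<l. \<Sum>j<l. f (a + i*d) * f (a + j*d))
        = (\<Sum>i<l. \<Sum>a<n. \<Sum>j<l. f (a + i*d) * f (a + j*d))" by (rule sum.swap)
    also have "\<dots> = (\<Sum>i<l. \<Sum>j<l. \<Sum>a<n. f (a + i*d) * f (a + j*d))"
      by (rule sum.cong[OF refl]) (rule sum.swap)
    finally show "(\<Sum>a<n. \<Sum>i<l. \<Sum>j<l. f (a + i*d) * f (a + j*d))
        = (\<Sum>i<l. \<Sum>j<l. \<Sum>a<n. f (a + i*d) * f (a + j*d))" .
  qed
  also have "\<dots> = (\<Sum>d\<in>Us. \<Sum>i<l. \<Sum>j<l. C (dst i j * d))"
    by (simp add: pair)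
  also have "\<dots> = (\<Sum>i<l. \<Sum>j<l. \<Sum>d\<in>Us. C (dst i j * d))"
    by (simp add: sum.swap[of _ Us])
  finally show ?thesis by (simp add: U_def)
qed

end


context apsetup begin

lemma cop: "\<not> p dvd u \<Longrightarrow> coprime n u"
proof -
  assume a: "\<not> p dvd u"
  have "coprime p u" using p a by (rule prime_imp_coprime)
  then show "coprime n u" using kpos by simp
qed

lemma unit_perm:
  assumes "\<not> p dvd u"
  shows "inj_on (\<lambda>d. (u*d) mod n) Us" "(\<lambda>d. (u*d) mod n) ` Us = Us"
proof -
  show inj: "inj_on (\<lambda>d. (u*d) mod n) Us"
  proof
    fix x y assume "x \<in> Us" "y \<in> Us" "(u*x) mod n = (u*y) mod n"
    from this(3) have "x mod n = y mod n" by (rule mod_cancel_nat[OF cop[OF assms]])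
    then show "x = y" using \<open>x \<in> Us\<close> \<open>y \<in> Us\<close> by (simp add: Us_def)
  qed
  have "(\<lambda>d. (u*d) mod n) ` Us \<subseteq> Us"
  proof
    fix z assume "z \<in> (\<lambda>d. (u*d) mod n) ` Us"
    then obtain d where d: "d \<in> Us" "z = (u*d) mod n" by auto
    have pn: "p dvd n" using kpos by simp
    have "\<not> p dvd d" using d by (simp add: Us_def)
    then have "\<not> p dvd u*d" using assms p by (simp add: prime_dvd_mult_iff)
    then have "\<not> p dvd z" using d pn by (simp add: dvd_mod_iff)
    moreover have "z < n" using d npos by simp
    ultimately show "z \<in> Us" by (simp add: Us_def)
  qed
  moreover have "finite Us" by (simp add: Us_def)
  ultimately show "(\<lambda>d. (u*d) mod n) ` Us = Us" using inj endo_inj_surj by blast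
qed

lemma U_unit:
  assumes "\<not> p dvd u"
  shows "U (t*u) = U t"
proof -
  have "U (t*u) = (\<Sum>d\<in>Us. C (t * ((u*d) mod n)))"
    unfolding U_def
  proof (rule sum.cong[OF refl])
    fix d
    have "C (t*u*d) = C ((t*u*d) mod n)" by (simp add: C_mod)
    also have "(t*u*d) mod n = (t * ((u*d) mod n)) mod n" by (simp add: mod_mult_right_eq mult.assoc)
    finally show "C (t*u*d) = C (t * ((u*d) mod n))" by (simp add: C_mod)
  qed
  also have "\<dots> = (\<Sum>d\<in>(\<lambda>d. (u*d) mod n) ` Us. C (t*d))"
    using sum.reindex[OF unit_perm(1)[OF assms], of "\<lambda>d. C (t*d)"] by (simp add: comp_def)
  also have "\<dots> = U t" using unit_perm(2)[OF assms] by (simp add: U_def)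
  finally show ?thesis .
qed

lemma T_img: "v \<le> k \<Longrightarrow> T v = (\<lambda>y. y * p^v) ` {..<p^(k-v)}"
proof -
  assume vk: "v \<le> k"
  have nn: "n = p^(k-v) * p^v" using vk by (simp add: power_add[symmetric])
  show ?thesis
  proof
    show "T v \<subseteq> (\<lambda>y. y * p^v) ` {..<p^(k-v)}"
    proof
      fix t assume "t \<in> T v"
      then obtain y where y: "t = p^v * y" "t < n" by (auto simp: T_def)
      then have "y < p^(k-v)" using nn p1 by (simp add: mult.commute)
      then show "t \<in> (\<lambda>y. y * p^v) ` {..<p^(k-v)}" using y by (auto simp: mult.commute)
    qed
  next
    show "(\<lambda>y. y * p^v) ` {..<p^(k-v)} \<subseteq> T v"
    proof
      fix t assume "t \<in> (\<lambda>y. y * p^v) ` {..<p^(k-v)}"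
      then obtain y where y: "y < p^(k-v)" "t = y * p^v" by auto
      then have "t < n" using nn p1 by simp
      then show "t \<in> T v" using y by (simp add: T_def)
    qed
  qed
qed

lemma T_card: "v \<le> k \<Longrightarrow> card (T v) = p^(k-v)"
proof -
  assume vk: "v \<le> k"
  have "inj_on (\<lambda>y. y * p^v) {..<p^(k-v)}" using p1 by (auto simp: inj_on_def)
  then show ?thesis using T_img[OF vk] by (simp add: card_image)
qed

lemma T_fin: "finite (T v)" by (simp add: T_def)

lemma Us_card: "card Us = p^k - p^(k-1)"
proof -
  have "Us = {..<n} - T 1" by (auto simp: Us_def T_def)
  moreover have "T 1 \<subseteq> {..<n}" by (auto simp: T_def)
  ultimately have "card Us = n - card (T 1)" by (simp add: card_Diff_subset T_fin)
  then show ?thesis using T_card[of 1] kpos by simp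
qed

lemma Phi: "v \<le> k \<Longrightarrow> (\<Sum>t\<in>T v. U t) = int (card Us) * R v"
proof -
  assume vk: "v \<le> k"
  have "(\<Sum>t\<in>T v. U t) = (\<Sum>d\<in>Us. \<Sum>t\<in>T v. C (t*d))"
    unfolding U_def by (rule sum.swap)
  also have "\<dots> = (\<Sum>d\<in>Us. R v)"
  proof (rule sum.cong[OF refl])
    fix d assume d: "d \<in> Us"
    then have nd: "\<not> p dvd d" by (simp add: Us_def)
    let ?h = "\<lambda>t. (t*d) mod n"
    have inj: "inj_on ?h (T v)"
    proof
      fix x y assume "x \<in> T v" "y \<in> T v" "?h x = ?h y"
      from this(3) have "(d*x) mod n = (d*y) mod n" by (simp add: mult.commute)
      then have "x mod n = y mod n" by (rule mod_cancel_nat[OF cop[OF nd]])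
      then show "x = y" using \<open>x \<in> T v\<close> \<open>y \<in> T v\<close> by (simp add: T_def)
    qed
    have sub: "?h ` T v \<subseteq> T v"
    proof
      fix z assume "z \<in> ?h ` T v"
      then obtain t where t: "t \<in> T v" "z = (t*d) mod n" by auto
      have "z < n" using t npos by simp
      moreover have "p^v dvd z"
      proof -
        have "p^v dvd n" using vk by (simp add: le_imp_power_dvd)
        moreover have "p^v dvd t*d" using t by (simp add: T_def)
        ultimately show ?thesis using t by (simp add: dvd_mod)
      qed
      ultimately show "z \<in> T v" by (simp add: T_def)
    qed
    have img: "?h ` T v = T v" using endo_inj_surj[OF T_fin sub inj] .
    have "(\<Sum>t\<in>T v. C (t*d)) = (\<Sum>t\<in>T v. C (?h t))" by (simp add: C_mod)
    also have "\<dots> = (\<Sum>t\<in>?h ` T v. C t)" using sum.reindex[OF inj, of C] by (simp add: comp_def)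
    also have "\<dots> = R v" using img by (simp add: R_def)
    finally show "(\<Sum>t\<in>T v. C (t*d)) = R v" .
  qed
  also have "\<dots> = int (card Us) * R v" by simp
  finally show ?thesis .
qed

definition "A v = U (p^v)"

lemma U_val:
  assumes "p^v dvd t" "\<not> p^(Suc v) dvd t"
  shows "U t = A v"
proof -
  obtain u where u: "t = p^v * u" using assms(1) by blast
  have "\<not> p dvd u"
  proof
    assume "p dvd u"
    then have "p^(Suc v) dvd t" using u by (simp add: mult_dvd_mono)
    then show False using assms(2) by simp
  qed
  then show ?thesis using u U_unit by (simp add: A_def)
qed

lemma A_eq:
  assumes "v < k"
  shows "A v = int (p^v) * (R v - R (Suc v))"
proof -
  have sub: "T (Suc v) \<subseteq> T v" by (auto simp: T_def intro: dvd_trans[OF le_imp_power_dvd])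
  have "(\<Sum>t\<in>T v. U t) = (\<Sum>t\<in>T (Suc v). U t) + (\<Sum>t\<in>T v - T (Suc v). U t)"
    using sum.subset_diff[OF sub T_fin] by (simp add: add.commute)
  moreover have "(\<Sum>t\<in>T v - T (Suc v). U t) = (\<Sum>t\<in>T v - T (Suc v). A v)"
  proof (rule sum.cong[OF refl])
    fix t assume "t \<in> T v - T (Suc v)"
    then have "p^v dvd t" "\<not> p^(Suc v) dvd t" using assms by (auto simp: T_def)
    then show "U t = A v" by (rule U_val)
  qed
  moreover have "card (T v - T (Suc v)) = p^(k-v) - p^(k - Suc v)"
    using sub assms by (simp add: card_Diff_subset T_fin T_card)
  ultimately have e: "int (card Us) * (R v - R (Suc v)) = int (p^(k-v) - p^(k - Suc v)) * A v"
    using Phi[of v] Phi[of "Suc v"] assms by (simp add: algebra_simps)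
  define w where "w = k - v - 1"
  have w: "k = v + Suc w" using assms by (simp add: w_def)
  have c1: "int (card Us) = int (p^v) * (int (p^(k-v) - p^(k - Suc v)))"
  proof -
    have le1: "p^w \<le> p^(Suc w)" using p1 by simp
    have "card Us = p^(v + Suc w) - p^(v+w)" using w Us_card by simp
    also have "\<dots> = p^v * (p^(Suc w) - p^w)" by (simp add: power_add right_diff_distrib' mult.left_commute)
    finally show ?thesis using w by simp
  qed
  have pos: "int (p^(k-v) - p^(k - Suc v)) \<noteq> 0"
  proof -
    have "p^(k - Suc v) < p^(k-v)" using p1 assms by (intro power_strict_increasing) auto
    then have "p^(k-v) - p^(k - Suc v) \<noteq> 0" by simp
    then show ?thesis by (simp only: of_nat_eq_0_iff not_False_eq_True)
  qed
  from e c1 have "int (p^(k-v) - p^(k - Suc v)) * (int (p^v) * (R v - R (Suc v)))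
     = int (p^(k-v) - p^(k - Suc v)) * A v" by (simp add: algebra_simps)
  then have "int (p^v) * (R v - R (Suc v)) = A v" by (rule mult_left_cancel[OF pos, THEN iffD1])
  then show ?thesis by simp
qed

lemma U0: "U 0 = int (card Us) * int n"
  by (simp add: U_def C0)

end



definition ind :: "bool \<Rightarrow> int" where "ind b = (if b then 1 else 0)"

lemma count_mod:
  fixes M Q r :: nat
  assumes "r < M"
  shows "(\<Sum>j<M*Q. ind (j mod M = r)) = int Q"
proof -
  have "(\<Sum>j<M*Q. ind (j mod M = r)) = (\<Sum>y<Q. \<Sum>x<M. ind ((x + M*y) mod M = r))"
    by (rule sum_split)
  also have "\<dots> = (\<Sum>y<Q. \<Sum>x<M. (if x = r then 1 else 0))"
    by (intro sum.cong refl) (simp add: ind_def)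
  also have "\<dots> = (\<Sum>y<Q. 1)" using assms by (simp add: sum.delta')
  finally show ?thesis by simp
qed

context apsetup begin

lemma dst_dvd: "M dvd dst i j \<longleftrightarrow> i mod M = j mod M"
proof (cases "i \<le> j")
  case True then show ?thesis using mod_eq_dvd_iff_nat[of i j M] by (simp add: dst_def eq_commute)
next
  case False then show ?thesis using mod_eq_dvd_iff_nat[of j i M] by (simp add: dst_def)
qed

lemma dst0: "dst i j = 0 \<longleftrightarrow> i = j" by (auto simp: dst_def)

lemma P_dvd:
  assumes "0 < M" "l = M*Q"
  shows "(\<Sum>i<l. \<Sum>j<l. ind (M dvd dst i j)) = int l * int Q"
proof -
  have "(\<Sum>i<l. \<Sum>j<l. ind (M dvd dst i j)) = (\<Sum>i<l. int Q)"
  proof (rule sum.cong[OF refl])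
    fix i
    have "(\<Sum>j<l. ind (M dvd dst i j)) = (\<Sum>j<M*Q. ind (j mod M = i mod M))"
      using assms(2) by (simp add: dst_dvd eq_commute)
    also have "\<dots> = int Q" using assms(1) by (intro count_mod) simp
    finally show "(\<Sum>j<l. ind (M dvd dst i j)) = int Q" .
  qed
  then show ?thesis by simp
qed

lemma P_top:
  assumes "l \<le> M"
  shows "(\<Sum>i<l. \<Sum>j<l. ind (M dvd dst i j)) = int l"
proof -
  have "(\<Sum>i<l. \<Sum>j<l. ind (M dvd dst i j)) = (\<Sum>i<l. \<Sum>j<l. (if j = i then 1 else 0))"
  proof (intro sum.cong refl)
    fix i j assume "i \<in> {..<l}" "j \<in> {..<l}"
    then have lt: "dst i j < M" using assms by (auto simp: dst_def)
    have "M dvd dst i j \<longleftrightarrow> dst i j = 0"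
    proof
      assume "M dvd dst i j"
      then show "dst i j = 0" using lt by (metis dvd_imp_le leD not_gr0)
    qed simp
    then show "ind (M dvd dst i j) = (if j = i then 1 else 0)" by (auto simp: ind_def dst0)
  qed
  also have "\<dots> = (\<Sum>i<l. 1)" by (intro sum.cong refl) (simp add: sum.delta)
  finally show ?thesis by simp
qed

lemma not_unit_p: "\<not> is_unit p" using p1 by simp

lemma U_pair:
  assumes "i < l" "j < l" "l \<le> p^(Suc m)"
  shows "U (dst i j) = (\<Sum>v\<le>m. A v * (ind (p^v dvd dst i j) - ind (p^(Suc v) dvd dst i j)))
                       + (if i = j then U 0 else 0)"
proof (cases "i = j")
  case True then show ?thesis by (simp add: dst_def ind_def)
next
  case False
  define t where "t = dst i j"
  have t0: "t \<noteq> 0" using False by (simp add: t_def dst0)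
  have tl: "t < p^(Suc m)" using assms by (auto simp: t_def dst_def)
  define mu where "mu = multiplicity p t"
  have dv: "p^v dvd t \<longleftrightarrow> v \<le> mu" for v
    using power_dvd_iff_le_multiplicity[OF t0 not_unit_p] by (simp add: mu_def)
  have "\<not> p^(Suc m) dvd t" using tl t0 by (metis dvd_imp_le leD not_gr0)
  then have mum: "mu \<le> m" using dv by (meson not_less_eq_eq)
  have "(\<Sum>v\<le>m. A v * (ind (p^v dvd t) - ind (p^(Suc v) dvd t)))
      = (\<Sum>v\<le>m. (if v = mu then A v else 0))"
  proof (rule sum.cong[OF refl])
    fix v
    have "ind (p^v dvd t) - ind (p^(Suc v) dvd t) = (if v = mu then 1 else 0)"
      unfolding dv ind_def by auto
    then show "A v * (ind (p^v dvd t) - ind (p^(Suc v) dvd t)) = (if v = mu then A v else 0)"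
      by simp
  qed
  also have "\<dots> = A mu" using mum by (simp add: sum.delta')
  also have "A mu = U t"
  proof -
    have h1: "p^mu dvd t" by (simp only: dv)
    have h2: "\<not> p^(Suc mu) dvd t" by (simp only: dv)
    show ?thesis by (rule U_val[OF h1 h2, symmetric])
  qed
  finally show ?thesis using False by (simp add: t_def)
qed

definition "P l v = (\<Sum>i<l. \<Sum>j<l. ind (p^v dvd dst i j))"

lemma total2:
  assumes "l \<le> p^(Suc m)"
  shows "(\<Sum>i<l. \<Sum>j<l. U (dst i j)) = (\<Sum>v\<le>m. A v * (P l v - P l (Suc v))) + int l * U 0"
proof -
  have "(\<Sum>i<l. \<Sum>j<l. U (dst i j)) =
     (\<Sum>i<l. \<Sum>j<l. (\<Sum>v\<le>m. A v * (ind (p^v dvd dst i j) - ind (p^(Suc v) dvd dst i j)))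
                       + (if i = j then U 0 else 0))"
    using assms by (intro sum.cong refl U_pair) auto
  also have "\<dots> = (\<Sum>i<l. \<Sum>j<l. \<Sum>v\<le>m. A v * (ind (p^v dvd dst i j) - ind (p^(Suc v) dvd dst i j)))
       + (\<Sum>i<l. \<Sum>j<l. (if i = j then U 0 else 0))"
    by (simp add: sum.distrib)
  also have "(\<Sum>i<l. \<Sum>j<l. (if i = j then U 0 else 0)) = int l * U 0"
    by (simp add: sum.delta)
  also have "(\<Sum>i<l. \<Sum>j<l. \<Sum>v\<le>m. A v * (ind (p^v dvd dst i j) - ind (p^(Suc v) dvd dst i j)))
      = (\<Sum>i<l. \<Sum>v\<le>m. \<Sum>j<l. A v * (ind (p^v dvd dst i j) - ind (p^(Suc v) dvd dst i j)))"
    by (rule sum.cong[OF refl]) (rule sum.swap)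
  also have "\<dots> = (\<Sum>v\<le>m. \<Sum>i<l. \<Sum>j<l. A v * (ind (p^v dvd dst i j) - ind (p^(Suc v) dvd dst i j)))"
    by (rule sum.swap)
  also have "\<dots> = (\<Sum>v\<le>m. A v * (P l v - P l (Suc v)))"
    by (rule sum.cong[OF refl]) (simp add: P_def sum_distrib_left sum_subtractf right_diff_distrib)
  finally show ?thesis .
qed

end


context apsetup begin

lemma S_split:
  assumes "v < k"
  shows "S v c = (\<Sum>r<p. S (Suc v) (c + p^v * r))"
proof -
  have e: "p^(k-v) = p * p^(k - Suc v)" using assms
    by (metis Suc_diff_Suc power_Suc)
  have "S v c = (\<Sum>y<p * p^(k - Suc v). f (c + y * p^v))" by (simp add: S_def e)
  also have "\<dots> = (\<Sum>z<p^(k - Suc v). \<Sum>r<p. f (c + (r + p*z) * p^v))" by (rule sum_split)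
  also have "\<dots> = (\<Sum>r<p. \<Sum>z<p^(k - Suc v). f (c + (r + p*z) * p^v))" by (rule sum.swap)
  also have "\<dots> = (\<Sum>r<p. S (Suc v) (c + p^v * r))"
    unfolding S_def
    by (intro sum.cong refl) (simp add: algebra_simps)
  finally show ?thesis .
qed

lemma S_per:
  assumes "v \<le> k"
  shows "S v (c + p^v * z) = S v c"
proof -
  define h where "h y = f (c + y * p^v)" for y
  have nn: "p^(k-v) * p^v = n" using assms by (simp add: power_add[symmetric])
  have hp: "h (y + p^(k-v)) = h y" for y
  proof -
    have "c + (y + p^(k-v)) * p^v = (c + y * p^v) + n" using nn by (simp add: algebra_simps)
    then show ?thesis unfolding h_def by (simp only: fper)
  qed
  have "S v (c + p^v * z) = (\<Sum>y<p^(k-v). h (y + z))"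
    unfolding S_def h_def by (intro sum.cong refl) (simp add: algebra_simps)
  also have "\<dots> = (\<Sum>y<p^(k-v). h y)" by (rule sum_shift_periodic) (rule hp)
  finally show ?thesis by (simp add: S_def h_def)
qed

lemma R_coset:
  assumes "v \<le> k"
  shows "R v = (\<Sum>c<p^v. (S v c)^2)"
proof -
  have inj: "inj_on (\<lambda>y. y * p^v) {..<p^(k-v)}" using p1 by (auto simp: inj_on_def)
  have nn: "n = p^v * p^(k-v)" using assms by (simp add: power_add[symmetric])
  have "R v = (\<Sum>y<p^(k-v). C (y * p^v))"
    unfolding R_def T_img[OF assms] using sum.reindex[OF inj, of C] by (simp add: comp_def)
  also have "\<dots> = (\<Sum>y<p^(k-v). \<Sum>x<n. f x * f (x + y * p^v))" by (simp add: C_def)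
  also have "\<dots> = (\<Sum>x<n. \<Sum>y<p^(k-v). f x * f (x + y * p^v))" by (rule sum.swap)
  also have "\<dots> = (\<Sum>x<n. f x * S v x)" by (simp add: S_def sum_distrib_left)
  also have "\<dots> = (\<Sum>x<p^v * p^(k-v). f x * S v x)" using nn by simp
  also have "\<dots> = (\<Sum>z<p^(k-v). \<Sum>c<p^v. f (c + p^v*z) * S v (c + p^v*z))" by (rule sum_split)
  also have "\<dots> = (\<Sum>z<p^(k-v). \<Sum>c<p^v. f (c + p^v*z) * S v c)" by (simp add: S_per[OF assms])
  also have "\<dots> = (\<Sum>c<p^v. \<Sum>z<p^(k-v). f (c + p^v*z) * S v c)" by (rule sum.swap)
  also have "\<dots> = (\<Sum>c<p^v. S v c * S v c)"
    by (intro sum.cong refl) (simp add: S_def sum_distrib_right mult.commute)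
  finally show ?thesis by (simp add: power2_eq_square)
qed

lemma R_k: "R k = int n"
proof -
  have "S k c = f c" for c by (simp add: S_def)
  then have "R k = (\<Sum>c<n. f c * f c)" by (simp add: R_coset power2_eq_square)
  then show ?thesis by (simp add: sq)
qed

lemma R_nn: "v \<le> k \<Longrightarrow> 0 \<le> R v" by (simp add: R_coset sum_nonneg)

lemma R_cs:
  assumes "v < k"
  shows "R v \<le> int p * R (Suc v)"
proof -
  have "R v = (\<Sum>c<p^v. (\<Sum>r<p. S (Suc v) (c + p^v * r))^2)"
    using assms by (simp add: R_coset S_split)
  also have "\<dots> \<le> (\<Sum>c<p^v. int p * (\<Sum>r<p. (S (Suc v) (c + p^v * r))^2))"
    by (intro sum_mono) (use cs_sum[of "{..<p}"] in simp)
  also have "\<dots> = int p * (\<Sum>r<p. \<Sum>c<p^v. (S (Suc v) (c + p^v * r))^2)"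
    by (simp add: sum_distrib_left sum.swap[of _ "{..<p}"])
  also have "(\<Sum>r<p. \<Sum>c<p^v. (S (Suc v) (c + p^v * r))^2) = (\<Sum>c<p^v * p. (S (Suc v) c)^2)"
    by (rule sum_split[symmetric])
  also have "\<dots> = R (Suc v)" using assms by (simp add: R_coset mult.commute)
  finally show ?thesis .
qed

lemma R_chain: "v + d = k \<Longrightarrow> R v \<le> int (p^d) * int n"
proof (induction d arbitrary: v)
  case 0 then show ?case by (simp add: R_k)
next
  case (Suc d)
  then have "R (Suc v) \<le> int (p^d) * int n" by simp
  moreover have "R v \<le> int p * R (Suc v)" using Suc.prems by (intro R_cs) simp
  ultimately have "R v \<le> int p * (int (p^d) * int n)"
    by (meson order_trans mult_left_mono of_nat_0_le_iff)
  then show ?case by (simp add: mult.assoc)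
qed

lemma gcd_pow: "v \<le> k \<Longrightarrow> gcd n (p^v) = p^v"
  by (simp add: gcd_nat.absorb2 le_imp_power_dvd)

lemma R_le:
  assumes "v < k"
  shows "R v \<le> int (p^v) * D^2"
proof -
  have sq: "(S v c)^2 \<le> D^2" if "c < p^v" for c
  proof -
    have pv: "p^v < n" using assms p1 by (simp add: power_strict_increasing)
    have L: "p^(k-v) \<le> n div gcd n (p^v)"
      using assms gcd_pow[of v] p1 by (simp add: power_diff)
    have "\<bar>S v c\<bar> \<le> D" unfolding S_def using that pv L by (intro apb) auto
    then show ?thesis by (simp add: abs_le_square_iff[symmetric] power2_abs) 
  qed
  have "R v = (\<Sum>c<p^v. (S v c)^2)" using assms by (simp add: R_coset)
  also have "\<dots> \<le> (\<Sum>c<p^v. D^2)" by (rule sum_mono) (simp add: sq)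
  finally have "R v \<le> (\<Sum>c<p^v. D^2)" .
  then show ?thesis by simp
qed

lemma D_nn: "0 \<le> D"
proof -
  have "\<bar>\<Sum>i<0. f (0 + i*0)\<bar> \<le> D" using npos by (intro apb) auto
  then show ?thesis by simp
qed

lemma Tot_le:
  assumes "l \<le> n"
  shows "(\<Sum>a<n. \<Sum>d\<in>Us. (\<Sum>i<l. f (a + i*d))^2) \<le> int n * int (card Us) * D^2"
proof -
  have "(\<Sum>i<l. f (a + i*d))^2 \<le> D^2" if "a < n" "d \<in> Us" for a d
  proof -
    have "coprime n d" using that cop by (simp add: Us_def)
    then have "gcd n d = 1" by simp
    then have "\<bar>\<Sum>i<l. f (a + i*d)\<bar> \<le> D" using that assms by (intro apb) (auto simp: Us_def)
    then show ?thesis using D_nn by (simp add: abs_le_square_iff[symmetric] power2_abs)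
  qed
  then have "(\<Sum>a<n. \<Sum>d\<in>Us. (\<Sum>i<l. f (a + i*d))^2) \<le> (\<Sum>a<n. \<Sum>d\<in>Us. D^2)"
    by (intro sum_mono) auto
  then show ?thesis by simp
qed

end



lemma alg:
  fixes p q X E d2 :: int
  assumes "p > 0" "q > 0" "q < p" "E > 0" "X > 0" "d2 \<ge> 0"
    and X3: "X^3 \<le> p*E^2"
    and pq: "p*(p-1) + q*(p-q) \<le> 16*(q*(p-q))"
    and hB: "p*(X*q)*E*(p*E)*(p-q) - (X*q)*X^2*(p-q)*d2 \<le> p*(p*E)*(E*(p-1))*d2"
  shows "p*X \<le> 16*d2"
proof -
  define K where "K = q*(p-q)"
  have K0: "K > 0" using assms by (simp add: K_def)
  have h1: "p*(p*X*K)*E^2 \<le> d2*(p*p*E^2*(p-1)) + d2*K*X^3"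
    using hB by (simp add: K_def power2_eq_square power3_eq_cube algebra_simps)
  have h2: "d2*K*X^3 \<le> d2*K*(p*E^2)"
    using X3 K0 \<open>d2 \<ge> 0\<close> by (intro mult_left_mono) auto
  have "p*(p*X*K)*E^2 \<le> (p*E^2) * (d2*(p*(p-1) + K))"
    using h1 h2 by (simp add: algebra_simps)
  then have "(p*E^2) * (p*X*K) \<le> (p*E^2) * (d2*(p*(p-1) + K))"
    by (simp add: algebra_simps)
  then have h3: "p*X*K \<le> d2*(p*(p-1) + K)"
    using assms by (simp add: mult_le_cancel_left_pos)
  have "d2*(p*(p-1) + K) \<le> d2*(16*K)"
    using pq \<open>d2 \<ge> 0\<close> by (intro mult_left_mono) (auto simp: K_def)
  with h3 have "K*(p*X) \<le> K*(16*d2)" by (simp add: algebra_simps)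
  then show ?thesis using K0 by (simp add: mult_le_cancel_left_pos)
qed

context apsetup begin

lemma identity:
  assumes "Suc m \<le> k" "1 \<le> q" "q < p" and ld: "l = p^m * q"
  shows "(\<Sum>a<n. \<Sum>d\<in>Us. (\<Sum>i<l. f (a + i*d))^2)
     = int l * int q * (int (p^m) - int (p^(m-1))) * (R 0 - R m)
       + int (p^m) * int l * (int q - 1) * (R m - R (Suc m)) + int l * (int (card Us) * int n)"
proof -
  have lle: "l \<le> p^(Suc m)" using ld assms(3) by simp
  have Pv: "P l v = int l * int (p^(m-v) * q)" if "v \<le> m" for v
  proof -
    have "l = p^v * (p^(m-v) * q)" using ld that
      by (simp add: mult.assoc[symmetric] power_add[symmetric])
    then show ?thesis unfolding P_def using p1 by (intro P_dvd) auto
  qed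
  have PSm: "P l (Suc m) = int l" unfolding P_def using lle by (rule P_top)
  have tv: "A v * (P l v - P l (Suc v)) = int l * int q * (int (p^m) - int (p^(m-1))) * (R v - R (Suc v))"
    if "v < m" for v
  proof -
    have e1: "p^v * p^(m-v) = p^m" using that by (simp add: power_add[symmetric])
    have e2: "p^v * p^(m - Suc v) = p^(m-1)" using that by (simp add: power_add[symmetric])
    have a: "A v = int (p^v) * (R v - R (Suc v))" using that assms(1) by (intro A_eq) simp
    have b: "P l v - P l (Suc v) = int l * int q * (int (p^(m-v)) - int (p^(m - Suc v)))"
      using Pv[of v] Pv[of "Suc v"] that by (simp add: algebra_simps)
    have "A v * (P l v - P l (Suc v)) = int l * int q * (int (p^v * p^(m-v)) - int (p^v * p^(m - Suc v))) * (R v - R (Suc v))"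
      by (simp only: a b) (simp add: algebra_simps)
    then show ?thesis by (simp only: e1 e2)
  qed
  have tm: "A m * (P l m - P l (Suc m)) = int (p^m) * int l * (int q - 1) * (R m - R (Suc m))"
  proof -
    have a: "A m = int (p^m) * (R m - R (Suc m))" using assms(1) by (intro A_eq) simp
    have b: "P l m - P l (Suc m) = int l * (int q - 1)" using Pv[of m] PSm by (simp add: algebra_simps)
    show ?thesis by (simp only: a b) (simp add: algebra_simps)
  qed
  have "(\<Sum>v\<le>m. A v * (P l v - P l (Suc v))) = (\<Sum>v<m. A v * (P l v - P l (Suc v))) + A m * (P l m - P l (Suc m))"
    by (simp add: lessThan_Suc_atMost[symmetric])
  also have "(\<Sum>v<m. A v * (P l v - P l (Suc v))) = (\<Sum>v<m. int l * int q * (int (p^m) - int (p^(m-1))) * (R v - R (Suc v)))"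
    by (intro sum.cong refl tv) simp
  also have "\<dots> = int l * int q * (int (p^m) - int (p^(m-1))) * (R 0 - R m)"
    by (simp add: sum_distrib_left[symmetric] sum_lessThan_telescope')
  finally have "(\<Sum>v\<le>m. A v * (P l v - P l (Suc v))) = int l * int q * (int (p^m) - int (p^(m-1))) * (R 0 - R m) + int (p^m) * int l * (int q - 1) * (R m - R (Suc m))"
    using tm by simp
  then show ?thesis using total[of l] total2[OF lle] U0 by simp
qed

end


context apsetup begin

lemma key:
  assumes mk: "Suc m \<le> k" and m3: "3*m + 1 \<le> 2*k" and q1: "1 \<le> q" and qp: "q < p"
    and pq: "p*(p-1) + q*(p-q) \<le> 16*(q*(p-q))"
  shows "int (p^(Suc m)) \<le> 16 * D^2"
proof -
  define l where "l = p^m * q"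
  define Tot where "Tot = (\<Sum>a<n. \<Sum>d\<in>Us. (\<Sum>i<l. f (a + i*d))^2)"
  define X where "X = int (p^m)"
  define X' where "X' = int (p^(m-1))"
  define E where "E = int (p^(k-1))"
  define P where "P = int p"
  define Q where "Q = int q"
  define L where "L = int l"
  define z where "z = R 0"
  define x where "x = R m"
  define y where "y = R (Suc m)"
  define d2 where "d2 = D^2"
  have P1: "P > 1" using p1 by (simp add: P_def)
  have E0: "E > 0" using p1 by (simp add: E_def)
  have X0: "X > 0" using p1 by (simp add: X_def)
  have Q1: "Q \<ge> 1" "Q < P" using q1 qp by (auto simp: Q_def P_def)
  have LXQ: "L = X * Q" by (simp add: L_def X_def Q_def l_def)
  have L0: "L \<ge> 0" by (simp add: L_def)
  have d20: "d2 \<ge> 0" by (simp add: d2_def)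
  have kk: "k = Suc (k - 1)" using kpos by simp
  have nPE: "int n = P * E" using kk by (simp add: P_def E_def) (metis power_Suc)
  have nPE': "(int p)^k = P * E" using nPE by simp
  have phi: "int (card Us) = E * (P - 1)"
  proof -
    have "p^(k-1) \<le> p^k" using p1 by (simp add: power_increasing)
    then have "int (card Us) = int (p^k) - int (p^(k-1))" by (simp add: Us_card of_nat_diff)
    also have "int (p^k) = P * E" using nPE by simp
    finally show ?thesis by (simp add: E_def algebra_simps)
  qed
  have ln: "l \<le> n"
  proof -
    have "l \<le> p^m * p" using qp by (simp add: l_def)
    also have "\<dots> = p^(Suc m)" by (simp add: mult.commute)
    also have "\<dots> \<le> p^k" by (rule power_increasing) (use mk p1 in auto)
    finally show ?thesis .
  qed
  have Tle: "Tot \<le> (P*E) * (E*(P-1)) * d2"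
    using Tot_le[OF ln] by (simp add: Tot_def nPE nPE' phi d2_def)
  have Teq: "Tot = L * Q * (X - X') * (z - x) + X * L * (Q - 1) * (x - y) + L * ((E*(P-1)) * (P*E))"
    using identity[OF mk q1 qp l_def] by (simp add: Tot_def L_def Q_def X_def X'_def z_def x_def y_def phi nPE nPE')
  have z0: "z \<ge> 0" by (simp add: z_def R_nn)
  have x0: "x \<ge> 0" using mk by (simp add: x_def R_nn)
  have xle: "x \<le> X * d2" using mk R_le[of m] by (simp add: x_def X_def d2_def)
  have yle: "X * y \<le> E * (P*E)"
  proof -
    have "y \<le> int (p^(k - Suc m)) * int n" using mk R_chain[of "Suc m" "k - Suc m"] by (simp add: y_def)
    then have "X * y \<le> X * (int (p^(k - Suc m)) * int n)" using X0 by simp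
    also have "X * int (p^(k - Suc m)) = E"
    proof -
      have "m + (k - Suc m) = k - 1" using mk by simp
      then show ?thesis by (simp add: X_def E_def power_add[symmetric])
    qed
    then have "X * (int (p^(k - Suc m)) * int n) = E * (P*E)" by (simp add: nPE nPE' mult.assoc[symmetric])
    finally show ?thesis .
  qed
  have base: "L * (Q - 1) * (X * y) \<le> L * (Q - 1) * (E * (P*E))"
    using yle L0 Q1 by (intro mult_left_mono) auto
  have stepA: "P*L*E*(P*E)*(P-Q) - L*X^2*(P-Q)*d2 \<le> P * Tot"
  proof (cases "m = 0")
    case True
    then have XX: "X' = X" by (simp add: X_def X'_def)
    have "X * L * (Q - 1) * x \<ge> 0" using X0 L0 Q1 x0 by simp
    then have "Tot \<ge> L*((E*(P-1))*(P*E)) - L * (Q - 1) * (X * y)"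
      using Teq XX by (simp add: algebra_simps)
    then have "Tot \<ge> L*E*(P*E)*(P-Q)" using base by (simp add: algebra_simps)
    then have "P * Tot \<ge> P*(L*E*(P*E)*(P-Q))" using P1 by simp
    moreover have "L*X^2*(P-Q)*d2 \<ge> 0" using L0 Q1 d20 by simp
    ultimately show ?thesis by (simp add: algebra_simps)
  next
    case False
    then have PX: "P * X' = X" by (simp add: X_def X'_def P_def) (metis Suc_pred power_Suc)
    have c1: "L * Q * (X - X') \<ge> 0"
    proof -
      have "X' \<le> X" using PX P1 X0 by (smt (verit) mult_le_cancel_right1)
      then show ?thesis using L0 Q1 by simp
    qed
    have e: "P * Tot = P * (L * Q * (X - X')) * z - L*X*(P-Q)*x - P * (L * (Q - 1) * (X * y))
                 + P * L * ((E*(P-1)) * (P*E))"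
    proof -
      have "P * Tot = P * (L * Q * (X - X') * (z - x) + X * L * (Q - 1) * (x - y) + L * ((E*(P-1)) * (P*E)))"
        using Teq by simp
      also have "\<dots> = P * (L * Q * (X - X')) * z - L*X*(P-Q)*x - P * (L * (Q - 1) * (X * y))
                 + P * L * ((E*(P-1)) * (P*E))"
        by (simp only: PX[symmetric]) (simp add: algebra_simps)
      finally show ?thesis .
    qed
    have t1: "P * (L * Q * (X - X')) * z \<ge> 0" using c1 P1 z0 by simp
    have t2: "L*X*(P-Q)*x \<le> L*X*(P-Q)*(X*d2)"
      using xle L0 X0 Q1 by (intro mult_left_mono) auto
    have t3: "P * (L * (Q - 1) * (X * y)) \<le> P * (L * (Q - 1) * (E * (P*E)))"
      using base P1 by simp
    show ?thesis using e t1 t2 t3 by (simp add: algebra_simps power2_eq_square)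
  qed
  have hB: "P*(X*Q)*E*(P*E)*(P-Q) - (X*Q)*X^2*(P-Q)*d2 \<le> P*(P*E)*(E*(P-1))*d2"
  proof -
    have "P * Tot \<le> P * ((P*E) * (E*(P-1)) * d2)" using Tle P1 by simp
    then show ?thesis using stepA LXQ by (simp add: algebra_simps)
  qed
  have X3: "X^3 \<le> P*E^2"
  proof -
    have "P^(3*m) \<le> P^(Suc (2*(k-1)))" using m3 P1 by (intro power_increasing) auto
    then show ?thesis by (simp add: X_def E_def P_def power_mult[symmetric] mult.commute)
  qed
  have pq': "P*(P-1) + Q*(P-Q) \<le> 16*(Q*(P-Q))"
  proof -
    have "int (p*(p-1) + q*(p-q)) \<le> int (16*(q*(p-q)))" using pq by (simp only: of_nat_le_iff)
    moreover have "int (p - 1) = P - 1" using p1 by (simp add: P_def of_nat_diff)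
    moreover have "int (p - q) = P - Q" using qp by (simp add: P_def Q_def of_nat_diff)
    ultimately show ?thesis by (simp only: of_nat_add of_nat_mult of_nat_numeral) (simp add: P_def Q_def)
  qed
  have "P*X \<le> 16*d2"
    by (rule alg[OF _ _ _ E0 X0 d20 X3 pq' hB]) (use P1 Q1 in auto)
  then show ?thesis by (simp add: P_def X_def d2_def)
qed

end



lemma inj_aux:
  fixes n d a x y L :: nat
  assumes n0: "n > 0" and L: "L \<le> n div gcd n d" and xy: "x \<le> y" "y < L"
    and eq: "(a + x*d) mod n = (a + y*d) mod n"
  shows "x = y"
proof -
  define g where "g = gcd n d"
  have g0: "g > 0" using n0 by (simp add: g_def)
  have "n dvd (a + y*d) - (a + x*d)" using eq xy mod_eq_dvd_iff_nat[of "a + x*d" "a + y*d" n] by simp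
  moreover have "(a + y*d) - (a + x*d) = (y - x) * d" by (simp add: diff_mult_distrib)
  ultimately have dv: "n dvd (y - x) * d" by simp
  have nn: "n = g * (n div g)" by (simp add: g_def)
  have dd: "d = g * (d div g)" by (simp add: g_def)
  have "g * (n div g) dvd g * ((y - x) * (d div g))"
    using dv nn dd by (metis mult.left_commute)
  then have "n div g dvd (y - x) * (d div g)" using g0 by simp
  moreover have "coprime (n div g) (d div g)" using n0 unfolding g_def by (intro div_gcd_coprime) simp
  ultimately have "n div g dvd y - x" using coprime_dvd_mult_left_iff by blast
  moreover have "y - x < n div g" using xy L by (simp add: g_def)
  ultimately have "y - x = 0" using dvd_imp_le by (metis leD not_gr0)
  then show ?thesis using xy by simp
qed

lemma inj_ap:
  fixes n d a L :: nat
  assumes n0: "n > 0" and L: "L \<le> n div gcd n d"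
  shows "inj_on (\<lambda>i. (a + i*d) mod n) {..<L}"
proof
  fix x y assume x: "x \<in> {..<L}" and y: "y \<in> {..<L}" and e: "(a + x*d) mod n = (a + y*d) mod n"
  show "x = y"
  proof (cases "x \<le> y")
    case True then show ?thesis using inj_aux[OF n0 L True _ e] y by simp
  next
    case False then show ?thesis using inj_aux[OF n0 L _ _ e[symmetric]] x by simp
  qed
qed

lemma APs_fin: "n > 0 \<Longrightarrow> finite (APs n)"
proof -
  assume "n > 0"
  have "APs n \<subseteq> Pow {..<n}" unfolding APs_def using \<open>n > 0\<close> by auto
  then show ?thesis by (rule finite_subset) simp
qed

lemma ap_mem:
  assumes "a < n" "d < n" "L \<le> n div gcd n d"
  shows "{(a + i*d) mod n | i. i < L} \<in> APs n"
  unfolding APs_def using assms by blast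

lemma pq_ineq:
  fixes p :: nat
  assumes "p \<ge> 2"
  shows "p*(p-1) + (p div 2)*(p - p div 2) \<le> 16*((p div 2)*(p - p div 2))"
proof -
  define q where "q = p div 2"
  define r where "r = p mod 2"
  have pq: "p = 2*q + r" by (simp add: q_def r_def)
  have r1: "r \<le> 1" by (simp add: r_def)
  have q1: "q \<ge> 1" using assms by (simp add: q_def)
  have e: "p - q = q + r" using pq by simp
  have "p*(p-1) \<le> p*p" by simp
  also have "p*p = 4*(q*q) + 4*(q*r) + r*r" using pq by (simp add: algebra_simps)
  also have "r*r \<le> q*q" using r1 q1 by (metis le_trans mult_le_mono one_le_mult_iff)
  finally have "p*(p-1) \<le> 5*(q*q) + 4*(q*r)" by simp
  then have "p*(p-1) + q*(q+r) \<le> 16*(q*(q+r))" by (simp add: algebra_simps)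
  then show ?thesis using e by (simp add: q_def)
qed




theorem corollary4p9:
  fixes p k :: nat
  assumes "prime p" and "k > 0"
  shows "real_of_int (disc_AP (p ^ k))
           \<ge> 1/4 * real p powr (real (k - k div 3) / 2)"
proof -
  define n where "n = p^k"
  define e where "e = k - k div 3"
  define m where "m = e - 1"
  define q where "q = p div 2"
  have p2: "p \<ge> 2" using assms(1) by (simp add: prime_ge_2_nat)
  have n0: "n > 0" using p2 by (simp add: n_def)
  have e1: "e \<ge> 1" using assms(2) by (simp add: e_def)
  have me: "Suc m = e" using e1 by (simp add: m_def)
  have mk: "Suc m \<le> k" using me by (simp add: e_def)
  have m3: "3*m + 1 \<le> 2*k" unfolding m_def e_def using assms(2) by presburger
  have q1: "1 \<le> q" using p2 by (simp add: q_def)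
  have qp: "q < p" using p2 by (simp add: q_def)
  have pq: "p*(p-1) + q*(p-q) \<le> 16*(q*(p-q))" unfolding q_def using pq_ineq[OF p2] .
  define PI where "PI = ({0..<n} \<rightarrow>\<^sub>E {1, - 1::int})"
  define Mx where "Mx \<chi> = Max {\<bar>sum \<chi> A\<bar> |A. A \<in> APs n}" for \<chi> :: "nat \<Rightarrow> int"
  have bound: "real (p^e) \<le> 16 * (real_of_int (Mx \<chi>))^2 \<and> 0 \<le> Mx \<chi>" if chi: "\<chi> \<in> PI" for \<chi>
  proof -
    define f where "f x = \<chi> (x mod n)" for x
    have fin: "finite {\<bar>sum \<chi> A\<bar> |A. A \<in> APs n}"
      using APs_fin[OF n0] by (simp add: Setcompr_eq_image)
    have apb: "\<bar>\<Sum>i<L. f (a + i*d)\<bar> \<le> Mx \<chi>"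
      if "a < p^k" "d < p^k" "L \<le> p^k div gcd (p^k) d" for a d L
    proof -
      let ?A = "{(a + i*d) mod n | i. i < L}"
      have mem: "?A \<in> APs n" using that by (intro ap_mem) (auto simp: n_def)
      have img: "?A = (\<lambda>i. (a + i*d) mod n) ` {..<L}" by auto
      have "sum \<chi> ?A = (\<Sum>i<L. f (a + i*d))"
        unfolding img using inj_ap[OF n0, of L d a] that
        by (simp add: sum.reindex f_def n_def)
      moreover have "\<bar>sum \<chi> ?A\<bar> \<le> Mx \<chi>" unfolding Mx_def using fin mem by (intro Max_ge) auto
      ultimately show ?thesis by simp
    qed
    have sq: "f x * f x = 1" for x
    proof -
      have "x mod n \<in> {0..<n}" using n0 by simp
      then have "\<chi> (x mod n) \<in> {1, -1}" using chi by (auto simp: PI_def PiE_iff)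
      then show ?thesis by (auto simp: f_def)
    qed
    interpret apsetup p k f "Mx \<chi>"
    proof
      show "prime p" by (rule assms(1))
      show "0 < k" by (rule assms(2))
      show "f (x mod p^k) = f x" for x by (simp add: f_def n_def)
      show "f x * f x = 1" for x by (rule sq)
    qed (rule apb)
    have "int (p^(Suc m)) \<le> 16 * (Mx \<chi>)^2" by (rule key[OF mk m3 q1 qp pq])
    then have "real (p^e) \<le> 16 * (real_of_int (Mx \<chi>))^2" using me
      by (metis of_int_le_iff of_int_of_nat_eq of_int_mult of_int_numeral of_int_power)
    then show ?thesis using D_nn by simp
  qed
  have MSeq: "{Mx \<chi> |\<chi>. \<chi> \<in> PI} = Mx ` PI" by (simp add: Setcompr_eq_image)
  have finPI: "finite PI" by (simp add: PI_def finite_PiE)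
  have nePI: "PI \<noteq> {}"
  proof -
    have "(\<lambda>x. if x \<in> {0..<n} then 1 else undefined) \<in> PI" by (simp add: PI_def PiE_iff extensional_def)
    then show ?thesis by blast
  qed
  have "disc_AP n = Min (Mx ` PI)" unfolding disc_AP_def Mx_def PI_def
    by (simp add: Setcompr_eq_image)
  moreover have "Min (Mx ` PI) \<in> Mx ` PI" using finPI nePI by (intro Min_in) auto
  ultimately obtain \<chi> where chi: "\<chi> \<in> PI" "disc_AP n = Mx \<chi>" by auto
  define D where "D = real_of_int (Mx \<chi>)"
  have D: "real (p^e) \<le> 16 * D^2" "0 \<le> D" using bound[OF chi(1)] by (auto simp: D_def)
  have "real p powr (real e / 2) = sqrt (real (p^e))"
  proof -
    have "real p powr (real e / 2) = (real p powr real e) powr (1/2)" by (simp add: powr_powr)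
    also have "real p powr real e = real (p^e)" using p2 by (simp add: powr_realpow)
    finally show ?thesis by (simp add: powr_half_sqrt)
  qed
  also have "sqrt (real (p^e)) \<le> sqrt ((4*D)^2)" using D(1) by (intro real_sqrt_le_mono) (simp add: power_mult_distrib)
  also have "sqrt ((4*D)^2) = 4*D" by (simp only: real_sqrt_abs) (use D(2) in simp)
  finally have "real p powr (real e / 2) \<le> 4 * D" .
  then show ?thesis using chi(2) by (simp add: D_def n_def e_def)
qed



end
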